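(* Let $\mathbb{K}\in\{\mathbb{R},\mathbb{C}\}$, let $\mathbf{R}_U\in\mathbb{K}^{n\times n}$ be self-adjoint positive definite, and let $U=\mathbb{K}^n$ carry the norm $\|\mathbf{x}\|_U:=\langle\mathbf{R}_U\mathbf{x},\mathbf{x}\rangle^{1/2}$. Let $\mathbf{u}^1,\dots,\mathbf{u}^m\in U$ and $\mathbf{U}_m:=[\mathbf{u}^1,\dots,\mathbf{u}^m]\in\mathbb{K}^{n\times m}$. Let $\mathbf{Q}\in\mathbb{K}^{s\times n}$ satisfy $\mathbf{Q}^{\mathrm{H}}\mathbf{Q}=\mathbf{R}_U$, and let $\mathbf{B}_r^*\in\mathbb{K}^{s\times m}$ be a best rank-$r$ approximation of $\mathbf{Q}\mathbf{U}_m$ with respect to the Frobenius norm $\|\cdot\|_F$. Then for any rank-$r$ matrix $\mathbf{B}_r\in\mathbb{K}^{s\times m}$, $$\frac1m\|\mathbf{Q}\mathbf{U}_m-\mathbf{B}_r^*\|_F^2\le\frac1m\sum_{i=1}^m\|\mathbf{u}^i-\mathbf{P}_{U_r}\mathbf{u}^i\|_U^2\le\frac1m\|\mathbf{Q}\mathbf{U}_m-\mathbf{B}_r\|_F^2,$$ where $U_r:=\{\mathbf{R}_U^{-1}\mathbf{Q}^{\mathrm{H}}\mathbf{b}:\mathbf{b}\in\mathrm{span}(\mathbf{B}_r)\}$ and $\mathbf{P}_{U_r}$ is the orthogonal projection onto $U_r$ with respect to $\|\cdot\|_U$.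
   Context: $\mathrm{span}(\mathbf{B}_r)$ denotes the column space of $\mathbf{B}_r$; $\mathbf{M}^{\mathrm{H}}$ is the (conjugate) transpose. *)

theory Defs
  imports "Jordan_Normal_Form.DL_Rank" "Jordan_Normal_Form.Schur_Decomposition"
begin

text \<open>All notions below are stated generically for
  a type that is both a conjugatable (ordered) field and a real normed field; the main
  theorem instantiates them for real and for complex separately.\<close>

definition frob_norm :: "'a :: {conjugatable_field, real_normed_field} mat \<Rightarrow> real" where
  "frob_norm A = sqrt (\<Sum>i<dim_row A. \<Sum>j<dim_col A. (norm (A $$ (i, j)))\<^sup>2)"

text \<open>Self-adjoint positive definite n x n matrix (inner product <v,w> = v . conj w).\<close>
definition self_adjoint_pd :: "nat \<Rightarrow> 'a :: conjugatable_ordered_field mat \<Rightarrow> bool" where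
  "self_adjoint_pd n R \<longleftrightarrow> R \<in> carrier_mat n n \<and> mat_adjoint R = R \<and>
     (\<forall>x \<in> carrier_vec n. x \<noteq> 0\<^sub>v n \<longrightarrow> (R *\<^sub>v x) \<bullet>c x > 0)"

text \<open>The energy norm ||x||_U = <R x, x>^(1/2); the inner product is real and nonnegative
  for positive definite R, the norm just takes that real value.\<close>
definition U_norm :: "'a :: {conjugatable_field, real_normed_field} mat \<Rightarrow> 'a vec \<Rightarrow> real" where
  "U_norm R x = sqrt (norm ((R *\<^sub>v x) \<bullet>c x))"

definition U_proj :: "'a :: conjugatable_field mat \<Rightarrow> 'a vec set \<Rightarrow> 'a vec \<Rightarrow> 'a vec" where
  "U_proj R W x = (THE p. p \<in> W \<and> (\<forall>w \<in> W. (R *\<^sub>v (x - p)) \<bullet>c w = 0))"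

definition inv_mat :: "'a :: field mat \<Rightarrow> 'a mat" where
  "inv_mat A = (SOME B. B \<in> carrier_mat (dim_row A) (dim_row A) \<and>
      A * B = 1\<^sub>m (dim_row A) \<and> B * A = 1\<^sub>m (dim_row A))"

definition best_rank_approx ::
  "nat \<Rightarrow> nat \<Rightarrow> nat \<Rightarrow> 'a :: {conjugatable_field, real_normed_field} mat \<Rightarrow> 'a mat \<Rightarrow> bool" where
  "best_rank_approx s m r A B \<longleftrightarrow> B \<in> carrier_mat s m \<and> vec_space.rank s B \<le> r \<and>
     (\<forall>C \<in> carrier_mat s m. vec_space.rank s C \<le> r \<longrightarrow> frob_norm (A - B) \<le> frob_norm (A - C))"

definition U_r_space :: "nat \<Rightarrow> 'a :: conjugatable_field mat \<Rightarrow> 'a mat \<Rightarrow> 'a mat \<Rightarrow> 'a vec set" where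
  "U_r_space s R Q Br = {inv_mat R *\<^sub>v (mat_adjoint Q *\<^sub>v b) | b. b \<in> vec_space.col_space s Br}"

end

theory Submission
  imports Defs
begin

lemma conj_sum: "conjugate (sum f S) = (\<Sum>i\<in>S. conjugate (f i :: 'a :: conjugatable_ring))"
proof (cases "finite S")
  case True then show ?thesis
    by (induct S rule: finite_induct) (auto simp: conjugate_dist_add)
next
  case False then show ?thesis by simp
qed

lemma mat_adjoint_carrier[simp]: "mat_adjoint A \<in> carrier_mat (dim_col A) (dim_row A)"
  unfolding mat_adjoint_def by auto

lemma mat_adjoint_dims[simp]: "dim_row (mat_adjoint A) = dim_col A" "dim_col (mat_adjoint A) = dim_row A"
  unfolding mat_adjoint_def by auto

lemma mat_adjoint_index[simp]: "i < dim_col A \<Longrightarrow> j < dim_row A \<Longrightarrow> mat_adjoint A $$ (i,j) = conjugate (A $$ (j,i))"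
  unfolding mat_adjoint_def by (auto simp: mat_of_rows_index)

lemma cscalar_sym:
  fixes v w :: "'a :: conjugatable_field vec"
  assumes "v \<in> carrier_vec n" "w \<in> carrier_vec n"
  shows "v \<bullet>c w = conjugate (w \<bullet>c v)"
  using assms by (metis conjugate_conjugate_sprod conjugate_vec_sprod_comm carrier_vec_conjugate)

lemma adj_lemma:
  fixes A :: "'a :: conjugatable_field mat"
  assumes A: "A \<in> carrier_mat k l" and v: "v \<in> carrier_vec l" and b: "b \<in> carrier_vec k"
  shows "(A *\<^sub>v v) \<bullet>c b = v \<bullet>c (mat_adjoint A *\<^sub>v b)"
proof -
  have "(A *\<^sub>v v) \<bullet>c b = (\<Sum>i<k. (\<Sum>j<l. A $$ (i,j) * v $ j) * conjugate (b $ i))"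
    using A v b by (simp add: scalar_prod_def mult_mat_vec_def row_def lessThan_atLeast0)
  also have "\<dots> = (\<Sum>i<k. \<Sum>j<l. v $ j * (A $$ (i,j) * conjugate (b $ i)))"
    by (simp add: sum_distrib_right sum_distrib_left ac_simps)
  also have "\<dots> = (\<Sum>j<l. \<Sum>i<k. v $ j * (A $$ (i,j) * conjugate (b $ i)))"
    by (rule sum.swap)
  also have "\<dots> = (\<Sum>j<l. v $ j * conjugate (\<Sum>i<k. conjugate (A $$ (i,j)) * b $ i))"
    by (simp add: conj_sum sum_distrib_left conjugate_dist_mul)
  also have "\<dots> = v \<bullet>c (mat_adjoint A *\<^sub>v b)"
    using A v b by (simp add: scalar_prod_def mult_mat_vec_def row_def lessThan_atLeast0)
  finally show ?thesis .
qed

definition sqn :: "'a :: real_normed_field vec \<Rightarrow> real" where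
  "sqn v = (\<Sum>i<dim_vec v. (norm (v $ i))\<^sup>2)"

lemma sqn_nonneg: "sqn v \<ge> 0" unfolding sqn_def by (auto intro: sum_nonneg)

lemma cscalar_self_sqn:
  fixes v :: "'a :: {conjugatable_field, real_normed_field} vec"
  assumes hyp: "\<And>a::'a. a * conjugate a = of_real ((norm a)\<^sup>2)"
  shows "v \<bullet>c v = of_real (sqn v)"
  by (simp add: scalar_prod_def sqn_def hyp lessThan_atLeast0)


lemma pyth:
  fixes u v :: "'a :: {conjugatable_field, real_normed_field} vec"
  assumes hyp: "\<And>a::'a. a * conjugate a = of_real ((norm a)\<^sup>2)"
    and u: "u \<in> carrier_vec k" and v: "v \<in> carrier_vec k" and o: "u \<bullet>c v = 0"
  shows "sqn (u + v) = sqn u + sqn v"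
proof -
  have vu: "v \<bullet>c u = 0" using cscalar_sym[OF v u] o by (simp add: conjugate_zero)
  have "(u + v) \<bullet>c (u + v) = u \<bullet>c u + u \<bullet>c v + (v \<bullet>c u + v \<bullet>c v)"
    using u v by (simp add: conjugate_add_vec[OF u v] add_scalar_prod_distrib[of u k v] scalar_prod_add_distrib[of _ k])
  hence "(of_real (sqn (u+v)) :: 'a) = of_real (sqn u + sqn v)"
    using o vu by (simp add: cscalar_self_sqn[OF hyp])
  thus ?thesis using of_real_eq_iff by blast
qed

lemma frob_sq:
  fixes A :: "'a :: {conjugatable_field, real_normed_field} mat"
  shows "(frob_norm A)\<^sup>2 = (\<Sum>j<dim_col A. sqn (col A j))"
proof -
  have "(frob_norm A)\<^sup>2 = (\<Sum>i<dim_row A. \<Sum>j<dim_col A. (norm (A $$ (i, j)))\<^sup>2)"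
    unfolding frob_norm_def by (intro real_sqrt_pow2 sum_nonneg) auto
  also have "\<dots> = (\<Sum>j<dim_col A. \<Sum>i<dim_row A. (norm (A $$ (i, j)))\<^sup>2)" by (rule sum.swap)
  also have "\<dots> = (\<Sum>j<dim_col A. sqn (col A j))"
    unfolding sqn_def by (auto intro!: sum.cong)
  finally show ?thesis .
qed

lemma (in cof_vec_space) proj_exists:
  assumes S: "finite S" "S \<subseteq> carrier_vec n" and y: "y \<in> carrier_vec n"
  shows "\<exists>z \<in> span S. \<forall>v \<in> span S. (y - z) \<bullet>c v = 0"
proof -
  have li0: "lin_indpt {}" by (unfold lin_dep_def) auto
  obtain T where fT: "finite T" and mT: "maximal T (\<lambda>T. T \<subseteq> S \<and> lin_indpt T)"
    using maximal_exists_superset[OF S(1), of "\<lambda>T. T \<subseteq> S \<and> lin_indpt T" "{}"] li0 by blast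
  have TS: "T \<subseteq> S" and liT: "lin_indpt T" using mT unfolding maximal_def by auto
  have Tc: "T \<subseteq> carrier_vec n" using TS S by auto
  have ST: "S \<subseteq> span T"
  proof
    fix v assume vS: "v \<in> S"
    show "v \<in> span T"
    proof (rule ccontr)
      assume nv: "v \<notin> span T"
      have vT: "v \<notin> T" using nv span_mem[OF Tc] by auto
      have vc: "v \<in> carrier_vec n" using vS S by auto
      have "lin_indpt (T \<union> {v})" using lin_dep_iff_in_span[OF _ liT vc vT] Tc nv by auto
      moreover have "T \<union> {v} \<subseteq> S" using TS vS by auto
      ultimately have "T \<union> {v} = T" using mT unfolding maximal_def by blast
      thus False using vT by auto
    qed
  qed
  have spanTS: "span T = span S"
  proof
    show "span T \<subseteq> span S" using span_is_monotone[OF TS] .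
    show "span S \<subseteq> span T" using span_subsetI[OF Tc ST] .
  qed
  obtain ts where ts: "set ts = T" "distinct ts" using finite_distinct_list[OF fT] by blast
  define us where "us = gram_schmidt n ts"
  have tsc: "set ts \<subseteq> carrier_vec n" using ts Tc by auto
  have liT': "\<not> lin_dep (set ts)" using ts liT by auto
  note gs = gram_schmidt_result[OF tsc ts(2) liT' us_def]
  have usc: "set us \<subseteq> carrier_vec n" using gs by auto
  have dus: "distinct us" using gs by auto
  define e where "e = adjuster n y us + y"
  have ac: "adjuster n y us \<in> carrier_vec n" using y usc dus by auto
  have aS: "adjuster n y us \<in> span (set us)" using adjuster_in_span[OF y usc dus] .
  have ec: "e \<in> carrier_vec n" unfolding e_def using ac y by auto
  define z where "z = - adjuster n y us"
  have zS: "z \<in> span (set us)" unfolding z_def using span_neg[OF usc aS] ac by simp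
  have yz: "y - z = e" unfolding z_def e_def using ac y by auto
  have orth1: "conjugate e \<bullet> u = 0" if u: "u \<in> set us" for u
  proof -
    obtain i where i: "i < length us" "u = us ! i" using u by (metis in_set_conv_nth)
    have "e \<bullet>c u = 0" unfolding e_def i(2) using adjust_zero[OF usc gs(2) y i(1)] .
    moreover have uc: "u \<in> carrier_vec n" using u usc by auto
    ultimately have "conjugate (u \<bullet>c e) = 0" using cscalar_sym[OF ec uc] by simp
    hence "u \<bullet>c e = 0" using conjugate_zero_iff by blast
    thus ?thesis using conjugate_vec_sprod_comm[OF uc ec] by simp
  qed
  have "conjugate e \<in> orthogonal_complement (set us)"
    unfolding orthogonal_complement_def using orth1 ec by auto
  hence oc: "conjugate e \<in> orthogonal_complement (span (set us))"
    using in_orthogonal_complement_span[OF usc] by simp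
  have "\<forall>v \<in> span S. (y - z) \<bullet>c v = 0"
  proof
    fix v assume "v \<in> span S"
    hence v: "v \<in> span (set us)" using spanTS gs(1) ts by auto
    hence vc: "v \<in> carrier_vec n" using span_closed[OF usc] by auto
    have "conjugate e \<bullet> v = 0" using oc v unfolding orthogonal_complement_def by auto
    thus "(y - z) \<bullet>c v = 0" unfolding yz
      using conjugate_vec_sprod_comm[OF ec vc] by (metis comm_scalar_prod[OF carrier_vec_conjugate[OF vc] ec] conjugate_vec_sprod_comm[OF vc ec] cscalar_sym[OF ec vc] conjugate_zero)
  qed
  moreover have "z \<in> span S" using zS spanTS gs(1) ts by auto
  ultimately show ?thesis by blast
qed


lemma (in vec_space) max_span:
  assumes S: "finite S" "S \<subseteq> carrier_vec n" and mT: "maximal T (\<lambda>T. T \<subseteq> S \<and> lin_indpt T)"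
  shows "span T = span S"
proof -
  have TS: "T \<subseteq> S" and liT: "lin_indpt T" using mT unfolding maximal_def by auto
  have Tc: "T \<subseteq> carrier_vec n" using TS S by auto
  have ST: "S \<subseteq> span T"
  proof
    fix v assume vS: "v \<in> S"
    show "v \<in> span T"
    proof (rule ccontr)
      assume nv: "v \<notin> span T"
      have vT: "v \<notin> T" using nv span_mem[OF Tc] by auto
      have vc: "v \<in> carrier_vec n" using vS S by auto
      have "lin_indpt (T \<union> {v})" using lin_dep_iff_in_span[OF _ liT vc vT] Tc nv by auto
      moreover have "T \<union> {v} \<subseteq> S" using TS vS by auto
      ultimately have "T \<union> {v} = T" using mT unfolding maximal_def by blast
      thus False using vT by auto
    qed
  qed
  show "span T = span S"
  proof
    show "span T \<subseteq> span S" using span_is_monotone[OF TS] .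
    show "span S \<subseteq> span T" using span_subsetI[OF Tc ST] .
  qed
qed

lemma (in vec_space) max_exists:
  assumes "finite S"
  shows "\<exists>T. finite T \<and> maximal T (\<lambda>T. T \<subseteq> S \<and> lin_indpt T)"
proof -
  have li0: "lin_indpt {}" by (unfold lin_dep_def) auto
  show ?thesis using maximal_exists_superset[OF assms, of "\<lambda>T. T \<subseteq> S \<and> lin_indpt T" "{}"] li0 by blast
qed

lemma (in vec_space) rank_mult_le:
  assumes X: "X \<in> carrier_mat n k" and Y: "Y \<in> carrier_mat k m"
  shows "rank (X * Y) \<le> k"
proof -
  have XY: "X * Y \<in> carrier_mat n m" using X Y by auto
  obtain U where fU: "finite U" and mU: "maximal U (\<lambda>T. T \<subseteq> set (cols (X*Y)) \<and> lin_indpt T)"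
    using max_exists[of "set (cols (X*Y))"] by blast
  have rk: "rank (X*Y) = card U" using rank_card_indpt[OF XY mU] .
  have US: "U \<subseteq> set (cols (X*Y))" and liU: "lin_indpt U" using mU unfolding maximal_def by auto
  have Xc: "set (cols X) \<subseteq> carrier_vec n" using X cols_dim by blast
  have "U \<subseteq> span (set (cols X))"
  proof
    fix u assume "u \<in> U"
    hence "u \<in> set (cols (X*Y))" using US by auto
    then obtain j where j0: "j < length (cols (X*Y))" "u = cols (X*Y) ! j" by (metis in_set_conv_nth)
    hence j: "j < m" "u = col (X*Y) j" using XY by auto
    have "u = X *\<^sub>v col Y j" using j X Y by auto
    moreover have "col Y j \<in> carrier_vec k" using Y j by auto
    ultimately have "u \<in> col_space X" using col_space_eq[OF X] X by auto
    thus "u \<in> span (set (cols X))" unfolding col_space_def .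
  qed
  from replacement[OF fU _ Xc liU this] have "card U \<le> card (set (cols X))" by auto
  also have "\<dots> \<le> length (cols X)" by (rule card_length)
  also have "\<dots> = k" using X by auto
  finally show ?thesis using rk by simp
qed

lemma (in vec_space) rank_factor:
  assumes A: "A \<in> carrier_mat n m" and r: "rank A = r"
  shows "\<exists>T \<in> carrier_mat n r. col_space A \<subseteq> {T *\<^sub>v d | d. d \<in> carrier_vec r}"
proof -
  obtain U where fU: "finite U" and mU: "maximal U (\<lambda>T. T \<subseteq> set (cols A) \<and> lin_indpt T)"
    using max_exists[of "set (cols A)"] by blast
  have rk: "card U = r" using rank_card_indpt[OF A mU] r by simp
  have Ac: "set (cols A) \<subseteq> carrier_vec n" using A cols_dim by blast
  have sp: "span U = span (set (cols A))" using max_span[OF _ Ac mU] by simp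
  obtain ts where ts: "set ts = U" "distinct ts" using finite_distinct_list[OF fU] by blast
  have len: "length ts = r" using distinct_card[OF ts(2)] ts rk by simp
  have tsc: "set ts \<subseteq> carrier_vec n" using ts mU Ac unfolding maximal_def by auto
  define T where "T = mat_of_cols n ts"
  have T: "T \<in> carrier_mat n r" unfolding T_def using len by auto
  have cT: "cols T = ts" unfolding T_def using tsc by (simp add: cols_mat_of_cols)
  have "col_space A = col_space T" unfolding col_space_def cT ts(1) sp ..
  also have "\<dots> = {y \<in> carrier_vec n. \<exists>x \<in> carrier_vec r. T *\<^sub>v x = y}"
    using col_space_eq[OF T] carrier_matD[OF T] by simp
  finally have "col_space A \<subseteq> {T *\<^sub>v d | d. d \<in> carrier_vec r}" by auto
  from bexI[of "\<lambda>T. col_space A \<subseteq> {T *\<^sub>v d | d. d \<in> carrier_vec r}", OF this T]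
  show ?thesis .
qed


lemma main_generic:
  fixes R Q Um Bstar Br :: "'a :: {conjugatable_ordered_field, real_normed_field} mat"
  assumes hyp: "\<And>a::'a. a * conjugate a = of_real ((norm a)\<^sup>2)"
    and pd: "self_adjoint_pd n R" and Um: "Um \<in> carrier_mat n m" and Q: "Q \<in> carrier_mat s n"
    and QR: "mat_adjoint Q * Q = R" and best: "best_rank_approx s m r (Q * Um) Bstar"
    and Br: "Br \<in> carrier_mat s m" and rk: "vec_space.rank s Br = r"
  shows "(1 / real m) * (frob_norm (Q * Um - Bstar))\<^sup>2
        \<le> (1 / real m) * (\<Sum>i<m. (U_norm R (col Um i - U_proj R (U_r_space s R Q Br) (col Um i)))\<^sup>2)
      \<and> (1 / real m) * (\<Sum>i<m. (U_norm R (col Um i - U_proj R (U_r_space s R Q Br) (col Um i)))\<^sup>2)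
        \<le> (1 / real m) * (frob_norm (Q * Um - Br))\<^sup>2"
proof -
  interpret V: cof_vec_space s "TYPE('a)" .
  define QH where "QH = mat_adjoint Q"
  have QH: "QH \<in> carrier_mat n s" unfolding QH_def using Q by auto
  have R: "R \<in> carrier_mat n n" and Rsa: "mat_adjoint R = R"
    and Rpos: "\<And>x. x \<in> carrier_vec n \<Longrightarrow> x \<noteq> 0\<^sub>v n \<Longrightarrow> (R *\<^sub>v x) \<bullet>c x > 0"
    using pd unfolding self_adjoint_pd_def by auto
  have QRv: "R *\<^sub>v u = QH *\<^sub>v (Q *\<^sub>v u)" if "u \<in> carrier_vec n" for u
    using that QR[symmetric] QH Q unfolding QH_def[symmetric] by auto
  have F0: "(R *\<^sub>v u) \<bullet>c w = u \<bullet>c (R *\<^sub>v w)" if "u \<in> carrier_vec n" "w \<in> carrier_vec n" for u w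
    using adj_lemma[OF R that] Rsa by simp
  have F1: "(R *\<^sub>v u) \<bullet>c w = (Q *\<^sub>v u) \<bullet>c (Q *\<^sub>v w)" if u: "u \<in> carrier_vec n" and w: "w \<in> carrier_vec n" for u w
  proof -
    have "(Q *\<^sub>v u) \<bullet>c (Q *\<^sub>v w) = u \<bullet>c (QH *\<^sub>v (Q *\<^sub>v w))"
      unfolding QH_def using adj_lemma[OF Q u, of "Q *\<^sub>v w"] Q w by auto
    also have "\<dots> = u \<bullet>c (R *\<^sub>v w)" using QRv[OF w] by simp
    finally show ?thesis using F0[OF u w] by simp
  qed
  have Qinj: "x = 0\<^sub>v n" if x: "x \<in> carrier_vec n" and Qx: "Q *\<^sub>v x = 0\<^sub>v s" for x
  proof (rule ccontr)
    assume "x \<noteq> 0\<^sub>v n"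
    hence "(R *\<^sub>v x) \<bullet>c x > 0" using Rpos x by auto
    moreover have "R *\<^sub>v x = 0\<^sub>v n" using QRv[OF x] Qx QH by auto
    ultimately show False using x by simp
  qed
  have "det R \<noteq> 0"
  proof
    assume "det R = 0"
    then obtain v where v: "v \<in> carrier_vec n" "v \<noteq> 0\<^sub>v n" "R *\<^sub>v v = 0\<^sub>v n"
      using det_0_iff_vec_prod_zero_field[OF R] by blast
    have "(R *\<^sub>v v) \<bullet>c v > 0" using Rpos[OF v(1,2)] .
    thus False using v by simp
  qed
  from det_non_zero_imp_unit[OF R this, of "()"]
  obtain B where B: "B \<in> carrier_mat n n" "R * B = 1\<^sub>m n" "B * R = 1\<^sub>m n"
    unfolding Units_def ring_mat_def by auto
  define P where "P = inv_mat R"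
  have "\<exists>B. B \<in> carrier_mat (dim_row R) (dim_row R) \<and> R * B = 1\<^sub>m (dim_row R) \<and> B * R = 1\<^sub>m (dim_row R)"
    using B R by auto
  from someI_ex[OF this] have P: "P \<in> carrier_mat n n" "R * P = 1\<^sub>m n" "P * R = 1\<^sub>m n"
    unfolding P_def inv_mat_def using R by auto
  define M where "M = P * QH"
  have M: "M \<in> carrier_mat n s" unfolding M_def using P QH by auto
  have RM: "R * M = QH" unfolding M_def using P QH R
    by (metis assoc_mult_mat left_mult_one_mat)
  define W where "W = U_r_space s R Q Br"
  have CS: "V.col_space Br = {y \<in> carrier_vec s. \<exists>x \<in> carrier_vec m. Br *\<^sub>v x = y}"
    using V.col_space_eq[OF Br] Br by simp
  have h1: "P *\<^sub>v (QH *\<^sub>v b) = M *\<^sub>v b" if "b \<in> carrier_vec s" for b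
    unfolding M_def using P QH that by auto
  have W1: "W = {M *\<^sub>v b | b. b \<in> V.col_space Br}"
  proof (rule Set.set_eqI, rule iffI)
    fix y assume "y \<in> W"
    then obtain b where b: "y = inv_mat R *\<^sub>v (mat_adjoint Q *\<^sub>v b)" "b \<in> V.col_space Br"
      unfolding W_def U_r_space_def by blast
    have "b \<in> carrier_vec s" using b(2) CS by auto
    hence "y = M *\<^sub>v b" using b h1 unfolding P_def QH_def by simp
    thus "y \<in> {M *\<^sub>v b | b. b \<in> V.col_space Br}" using b by blast
  next
    fix y assume "y \<in> {M *\<^sub>v b | b. b \<in> V.col_space Br}"
    then obtain b where b: "y = M *\<^sub>v b" "b \<in> V.col_space Br" by blast
    have "b \<in> carrier_vec s" using b(2) CS by auto
    hence "y = inv_mat R *\<^sub>v (mat_adjoint Q *\<^sub>v b)" using b h1 unfolding P_def QH_def by simp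
    thus "y \<in> W" using b unfolding W_def U_r_space_def by blast
  qed
  define G where "G = M * Br"
  have G: "G \<in> carrier_mat n m" unfolding G_def using M Br by auto
  have W2: "W = {G *\<^sub>v c | c. c \<in> carrier_vec m}"
  proof (rule Set.set_eqI, rule iffI)
    fix y assume "y \<in> W"
    then obtain b where b: "y = M *\<^sub>v b" "b \<in> V.col_space Br" unfolding W1 by blast
    then obtain c where c: "c \<in> carrier_vec m" "b = Br *\<^sub>v c" unfolding CS by blast
    have "y = G *\<^sub>v c" unfolding b c G_def using M Br c by simp
    thus "y \<in> {G *\<^sub>v c | c. c \<in> carrier_vec m}" using c by blast
  next
    fix y assume "y \<in> {G *\<^sub>v c | c. c \<in> carrier_vec m}"
    then obtain c where c: "c \<in> carrier_vec m" "y = G *\<^sub>v c" by blast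
    have "y = M *\<^sub>v (Br *\<^sub>v c)" unfolding c G_def using M Br c by simp
    moreover have "Br *\<^sub>v c \<in> V.col_space Br" unfolding CS using c Br by auto
    ultimately show "y \<in> W" unfolding W1 by blast
  qed
  have Wc: "W \<subseteq> carrier_vec n" unfolding W2 using G by auto
  have Wdiff: "p1 - p2 \<in> W" if p12: "p1 \<in> W" "p2 \<in> W" for p1 p2
  proof -
    obtain c1 c2 where c: "c1 \<in> carrier_vec m" "c2 \<in> carrier_vec m" "p1 = G *\<^sub>v c1" "p2 = G *\<^sub>v c2"
      using p12 unfolding W2 by blast
    have "p1 - p2 = G *\<^sub>v (c1 - c2)" using c G by (simp add: mult_minus_distrib_mat_vec)
    thus ?thesis unfolding W2 using c by auto
  qed
  have QGv: "Q *\<^sub>v (G *\<^sub>v c) = (Q * G) *\<^sub>v c" if "c \<in> carrier_vec m" for c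
    using that Q G by auto
  have QG: "Q * G \<in> carrier_mat s m" using Q G by auto
  have proj: "U_proj R W x \<in> W \<and> (\<forall>w\<in>W. (Q *\<^sub>v (x - U_proj R W x)) \<bullet>c (Q *\<^sub>v w) = 0)"
    if x: "x \<in> carrier_vec n" for x
  proof -
    let ?P = "\<lambda>p. p \<in> W \<and> (\<forall>w \<in> W. (R *\<^sub>v (x - p)) \<bullet>c w = 0)"
    have eqv: "(R *\<^sub>v (x - p)) \<bullet>c w = (Q *\<^sub>v (x - p)) \<bullet>c (Q *\<^sub>v w)" if pw: "p \<in> W" "w \<in> W" for p w
    proof -
      have pc: "p \<in> carrier_vec n" and wc: "w \<in> carrier_vec n" using pw Wc by auto
      have "x - p \<in> carrier_vec n" using x pc by simp
      from F1[OF this wc] show ?thesis .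
    qed
    have ex: "\<exists>p. ?P p"
    proof -
      have Sc: "set (cols (Q * G)) \<subseteq> carrier_vec s" using QG cols_dim by blast
      have Qx: "Q *\<^sub>v x \<in> carrier_vec s" using Q x by auto
      obtain z where z: "z \<in> V.span (set (cols (Q*G)))"
        and zo: "\<forall>v\<in>V.span (set (cols (Q*G))). (Q *\<^sub>v x - z) \<bullet>c v = 0"
        using V.proj_exists[OF _ Sc Qx] by blast
      have spn: "V.span (set (cols (Q*G))) = {y \<in> carrier_vec s. \<exists>c \<in> carrier_vec m. (Q*G) *\<^sub>v c = y}"
        using V.col_space_eq[OF QG] carrier_matD[OF Q] carrier_matD[OF G] unfolding V.col_space_def by simp
      obtain c0 where c0: "c0 \<in> carrier_vec m" "z = (Q*G) *\<^sub>v c0" using z unfolding spn by auto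
      define p0 where "p0 = G *\<^sub>v c0"
      have p0W: "p0 \<in> W" unfolding p0_def W2 using c0 by auto
      have p0c: "p0 \<in> carrier_vec n" using p0W Wc by auto
      have "\<forall>w \<in> W. (R *\<^sub>v (x - p0)) \<bullet>c w = 0"
      proof
        fix w assume w: "w \<in> W"
        then obtain c where c: "c \<in> carrier_vec m" "w = G *\<^sub>v c" unfolding W2 by auto
        have "Q *\<^sub>v (x - p0) = Q *\<^sub>v x - z"
          using Q x p0c c0 QGv[OF c0(1)] unfolding p0_def by (simp add: mult_minus_distrib_mat_vec)
        moreover have "Q *\<^sub>v w \<in> V.span (set (cols (Q*G)))" unfolding spn c(2) QGv[OF c(1)]
          using c QG by auto
        ultimately show "(R *\<^sub>v (x - p0)) \<bullet>c w = 0" using eqv[OF p0W w] zo by auto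
      qed
      thus ?thesis using p0W by blast
    qed
    have un: "p1 = p2" if p1: "?P p1" and p2: "?P p2" for p1 p2
    proof -
      have dW: "p1 - p2 \<in> W" using Wdiff p1 p2 by auto
      have c1: "p1 \<in> carrier_vec n" and c2: "p2 \<in> carrier_vec n" using p1 p2 Wc by auto
      have o1: "(Q *\<^sub>v (x - p1)) \<bullet>c (Q *\<^sub>v (p1 - p2)) = 0" using p1 dW eqv[of p1 "p1 - p2"] by auto
      have o2: "(Q *\<^sub>v (x - p2)) \<bullet>c (Q *\<^sub>v (p1 - p2)) = 0" using p2 dW eqv[of p2 "p1 - p2"] by auto
      have e: "Q *\<^sub>v (x - p2) - Q *\<^sub>v (x - p1) = Q *\<^sub>v (p1 - p2)"
        using Q x c1 c2 by (simp add: mult_minus_distrib_mat_vec) (intro eq_vecI, auto)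
      define d where "d = Q *\<^sub>v (p1 - p2)"
      have dc: "conjugate d \<in> carrier_vec s" unfolding d_def using Q c1 c2 by simp
      have "d \<bullet>c d = (Q *\<^sub>v (x - p2) - Q *\<^sub>v (x - p1)) \<bullet>c d" unfolding d_def using e by simp
      also have "\<dots> = (Q *\<^sub>v (x - p2)) \<bullet>c d - (Q *\<^sub>v (x - p1)) \<bullet>c d"
        by (rule minus_scalar_prod_distrib[OF _ _ dc]) (use Q x c1 c2 in simp)+
      also have "\<dots> = 0" using o1 o2 unfolding d_def by simp
      finally have dsq: "(Q *\<^sub>v (p1 - p2)) \<bullet>c (Q *\<^sub>v (p1 - p2)) = 0" unfolding d_def .
      have dcar: "Q *\<^sub>v (p1 - p2) \<in> carrier_vec s" using Q c1 c2 by simp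
      have "Q *\<^sub>v (p1 - p2) = 0\<^sub>v s" using iffD1[OF conjugate_square_eq_0_vec[OF dcar] dsq] .
      hence z: "p1 - p2 = 0\<^sub>v n" using Qinj c1 c2 by auto
      show ?thesis
      proof (rule eq_vecI)
        show "dim_vec p1 = dim_vec p2" using c1 c2 by simp
        fix i assume i: "i < dim_vec p2"
        have "(p1 - p2) $ i = 0" using z i c2 by simp
        thus "p1 $ i = p2 $ i" using i c1 c2 by simp
      qed
    qed
    have "?P (U_proj R W x)" unfolding U_proj_def using theI[of ?P] ex un by blast
    thus ?thesis using eqv by auto
  qed
  define p where "p j = U_proj R W (col Um j)" for j
  have xc: "col Um j \<in> carrier_vec n" if "j < m" for j using Um that by auto
  have pW: "p j \<in> W" and po: "\<forall>w\<in>W. (Q *\<^sub>v (col Um j - p j)) \<bullet>c (Q *\<^sub>v w) = 0"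
    if "j < m" for j using proj[OF xc[OF that]] unfolding p_def by auto
  have pc: "p j \<in> carrier_vec n" if "j < m" for j using pW[OF that] Wc by auto
  have unorm: "(U_norm R v)\<^sup>2 = sqn (Q *\<^sub>v v)" if v: "v \<in> carrier_vec n" for v
  proof -
    have "(R *\<^sub>v v) \<bullet>c v = of_real (sqn (Q *\<^sub>v v))"
      using F1[OF v v] cscalar_self_sqn[OF hyp] by simp
    hence "U_norm R v = sqrt (sqn (Q *\<^sub>v v))" unfolding U_norm_def using sqn_nonneg[of "Q *\<^sub>v v"] by simp
    thus ?thesis using sqn_nonneg by simp
  qed
  have res: "(U_norm R (col Um j - p j))\<^sup>2 = sqn (Q *\<^sub>v (col Um j - p j))" if j: "j < m" for j
    using unorm xc[OF j] pc[OF j] by simp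
  have ineq2: "sqn (Q *\<^sub>v (col Um j - p j)) \<le> sqn (col (Q * Um - Br) j)" if j: "j < m" for j
  proof -
    define e where "e = col Um j - p j"
    have ec: "e \<in> carrier_vec n" unfolding e_def using xc[OF j] pc[OF j] by simp
    define b where "b = col Br j"
    have bc: "b \<in> carrier_vec s" unfolding b_def using Br j by simp
    have bCS: "b \<in> V.col_space Br" unfolding V.col_space_def b_def
    proof (rule V.span_mem)
      show "set (cols Br) \<subseteq> carrier_vec s" using Br cols_dim by blast
      show "col Br j \<in> set (cols Br)" using Br j by (simp add: cols_def)
    qed
    have MbW: "M *\<^sub>v b \<in> W" unfolding W1 using bCS by blast
    have Mbc: "M *\<^sub>v b \<in> carrier_vec n" using M bc by simp
    define u where "u = Q *\<^sub>v e"
    define v where "v = Q *\<^sub>v p j - b"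
    have uc: "u \<in> carrier_vec s" unfolding u_def using Q ec by simp
    have vc: "v \<in> carrier_vec s" unfolding v_def using Q pc[OF j] bc by simp
    have uQp: "u \<bullet>c (Q *\<^sub>v p j) = 0" unfolding u_def e_def using po[OF j] pW[OF j] by blast
    have "u \<bullet>c b = e \<bullet>c (QH *\<^sub>v b)" unfolding u_def QH_def using adj_lemma[OF Q ec bc] .
    also have "QH *\<^sub>v b = R *\<^sub>v (M *\<^sub>v b)" using RM[symmetric] R M bc by simp
    also have "e \<bullet>c (R *\<^sub>v (M *\<^sub>v b)) = (R *\<^sub>v e) \<bullet>c (M *\<^sub>v b)" using F0[OF ec Mbc] by simp
    also have "\<dots> = (Q *\<^sub>v e) \<bullet>c (Q *\<^sub>v (M *\<^sub>v b))" using F1[OF ec Mbc] .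
    also have "\<dots> = 0" unfolding e_def using po[OF j] MbW by blast
    finally have ub: "u \<bullet>c b = 0" .
    have Qpc: "Q *\<^sub>v p j \<in> carrier_vec s" using Q pc[OF j] by simp
    have "v \<bullet>c u = (Q *\<^sub>v p j) \<bullet>c u - b \<bullet>c u" unfolding v_def
      by (rule minus_scalar_prod_distrib[OF Qpc bc]) (use uc in simp)
    also have "(Q *\<^sub>v p j) \<bullet>c u = 0" using cscalar_sym[OF Qpc uc] uQp by (simp add: conjugate_zero)
    also have "b \<bullet>c u = 0" using cscalar_sym[OF bc uc] ub by (simp add: conjugate_zero)
    finally have vu: "v \<bullet>c u = 0" by simp
    have uv: "u \<bullet>c v = 0" using cscalar_sym[OF uc vc] vu by (simp add: conjugate_zero)
    have sum: "u + v = col (Q * Um - Br) j"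
    proof -
      have "col (Q * Um - Br) j = col (Q * Um) j - col Br j"
        by (intro eq_vecI) (use Q Um Br j in auto)
      hence "col (Q * Um - Br) j = Q *\<^sub>v col Um j - b" unfolding b_def col_mult2[OF Q Um j] .
      moreover have "u = Q *\<^sub>v col Um j - Q *\<^sub>v p j" unfolding u_def e_def
        using Q xc[OF j] pc[OF j] by (simp add: mult_minus_distrib_mat_vec)
      ultimately show ?thesis unfolding v_def using Q xc[OF j] pc[OF j] bc
        by (intro eq_vecI) auto
    qed
    have "sqn (col (Q * Um - Br) j) = sqn u + sqn v" unfolding sum[symmetric] using pyth[OF hyp uc vc uv] .
    thus ?thesis using sqn_nonneg[of v] unfolding u_def e_def by simp
  qed
  have sum2: "(\<Sum>j<m. (U_norm R (col Um j - p j))\<^sup>2) \<le> (frob_norm (Q * Um - Br))\<^sup>2"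
  proof -
    have "(\<Sum>j<m. (U_norm R (col Um j - p j))\<^sup>2) \<le> (\<Sum>j<m. sqn (col (Q * Um - Br) j))"
      using res ineq2 by (intro sum_mono) simp
    also have "\<dots> = (frob_norm (Q * Um - Br))\<^sup>2" using frob_sq[of "Q * Um - Br"] Br by simp
    finally show ?thesis .
  qed
  obtain T where T: "T \<in> carrier_mat s r" and Tsp: "V.col_space Br \<subseteq> {T *\<^sub>v d | d. d \<in> carrier_vec r}"
    using V.rank_factor[OF Br rk] by blast
  define K where "K = Q * M * T"
  have K: "K \<in> carrier_mat s r" unfolding K_def using Q M T by auto
  have dex: "\<exists>d. d \<in> carrier_vec r \<and> Q *\<^sub>v p j = K *\<^sub>v d" if j: "j < m" for j
  proof -
    obtain b where b: "p j = M *\<^sub>v b" "b \<in> V.col_space Br" using pW[OF j] unfolding W1 by blast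
    then obtain d where d: "d \<in> carrier_vec r" "b = T *\<^sub>v d" using Tsp by blast
    have "(Q * M * T) *\<^sub>v d = (Q * M) *\<^sub>v (T *\<^sub>v d)"
      by (rule assoc_mult_mat_vec[OF mult_carrier_mat[OF Q M] T d(1)])
    also have "\<dots> = Q *\<^sub>v (M *\<^sub>v (T *\<^sub>v d))"
      by (rule assoc_mult_mat_vec[OF Q M]) (use T d in simp)
    finally have "Q *\<^sub>v p j = K *\<^sub>v d" unfolding b d K_def by simp
    thus ?thesis using d by blast
  qed
  define dd where "dd j = (SOME d. d \<in> carrier_vec r \<and> Q *\<^sub>v p j = K *\<^sub>v d)" for j
  have dd: "dd j \<in> carrier_vec r \<and> Q *\<^sub>v p j = K *\<^sub>v dd j" if j: "j < m" for j
    unfolding dd_def using someI_ex[OF dex[OF j]] .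
  define D where "D = mat r m (\<lambda>(i,j). dd j $ i)"
  have D: "D \<in> carrier_mat r m" unfolding D_def by simp
  have colD: "col D j = dd j" if j: "j < m" for j
    using dd[OF j] j unfolding D_def by (intro eq_vecI) auto
  define Bp where "Bp = mat s m (\<lambda>(i,j). (Q *\<^sub>v p j) $ i)"
  have Bp: "Bp \<in> carrier_mat s m" unfolding Bp_def by simp
  have BpKD: "Bp = K * D"
  proof (rule eq_matI)
    fix i j assume i: "i < dim_row (K * D)" and j: "j < dim_col (K * D)"
    have i': "i < s" and j': "j < m" using i j K D by auto
    have "Bp $$ (i,j) = (K *\<^sub>v dd j) $ i" unfolding Bp_def using i' j' dd[OF j'] by simp
    also have "\<dots> = row K i \<bullet> col D j" using colD[OF j'] i' K by simp
    also have "\<dots> = (K * D) $$ (i,j)" using i' j' K D by simp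
    finally show "Bp $$ (i,j) = (K * D) $$ (i,j)" .
  qed (use K D Bp in auto)
  have rkBp: "vec_space.rank s Bp \<le> r" unfolding BpKD using V.rank_mult_le[OF K D] .
  have b1: "frob_norm (Q * Um - Bstar) \<le> frob_norm (Q * Um - Bp)"
    using best Bp rkBp unfolding best_rank_approx_def by blast
  have colBp: "col (Q * Um - Bp) j = Q *\<^sub>v (col Um j - p j)" if j: "j < m" for j
  proof -
    have "col (Q * Um - Bp) j = col (Q * Um) j - col Bp j"
      by (intro eq_vecI) (use Q Um Bp j in auto)
    also have "col (Q * Um) j = Q *\<^sub>v col Um j" by (rule col_mult2[OF Q Um j])
    also have "col Bp j = Q *\<^sub>v p j" unfolding Bp_def using j Q pc[OF j] by (intro eq_vecI) auto
    finally show ?thesis using Q Um j xc[OF j] pc[OF j] by (simp add: mult_minus_distrib_mat_vec)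
  qed
  have sum1: "(frob_norm (Q * Um - Bp))\<^sup>2 = (\<Sum>j<m. (U_norm R (col Um j - p j))\<^sup>2)"
  proof -
    have "(frob_norm (Q * Um - Bp))\<^sup>2 = (\<Sum>j<m. sqn (col (Q * Um - Bp) j))"
      using frob_sq[of "Q * Um - Bp"] Bp by simp
    also have "\<dots> = (\<Sum>j<m. (U_norm R (col Um j - p j))\<^sup>2)"
      using colBp res by (intro sum.cong) auto
    finally show ?thesis .
  qed
  have fn: "frob_norm (Q * Um - Bstar) \<ge> 0" unfolding frob_norm_def by (intro real_sqrt_ge_zero sum_nonneg) auto
  have "(frob_norm (Q * Um - Bstar))\<^sup>2 \<le> (frob_norm (Q * Um - Bp))\<^sup>2"
    using b1 fn by (intro power_mono) auto
  hence i1: "(frob_norm (Q * Um - Bstar))\<^sup>2 \<le> (\<Sum>j<m. (U_norm R (col Um j - p j))\<^sup>2)" using sum1 by simp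
  have mpos: "1 / real m \<ge> 0" by simp
  show ?thesis
    using mult_left_mono[OF i1 mpos] mult_left_mono[OF sum2 mpos] unfolding p_def W_def by simp
qed

lemma hyp_real: "(a::real) * conjugate a = of_real ((norm a)\<^sup>2)"
  by (simp add: power2_eq_square)

lemma hyp_complex: "(a::complex) * conjugate a = of_real ((norm a)\<^sup>2)"
  unfolding conjugate_complex_def by (rule complex_norm_square[symmetric])

theorem proposition2p4:
  shows
  "(\<forall>(n::nat) (m::nat) (s::nat) (r::nat) (R::real mat) (Q::real mat) (Um::real mat)
       (Bstar::real mat) (Br::real mat).
      self_adjoint_pd n R \<longrightarrow> Um \<in> carrier_mat n m \<longrightarrow>
      Q \<in> carrier_mat s n \<longrightarrow> mat_adjoint Q * Q = R \<longrightarrow>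
      best_rank_approx s m r (Q * Um) Bstar \<longrightarrow>
      Br \<in> carrier_mat s m \<longrightarrow> vec_space.rank s Br = r \<longrightarrow>
      (1 / real m) * (frob_norm (Q * Um - Bstar))\<^sup>2
        \<le> (1 / real m) * (\<Sum>i<m. (U_norm R (col Um i - U_proj R (U_r_space s R Q Br) (col Um i)))\<^sup>2)
      \<and> (1 / real m) * (\<Sum>i<m. (U_norm R (col Um i - U_proj R (U_r_space s R Q Br) (col Um i)))\<^sup>2)
        \<le> (1 / real m) * (frob_norm (Q * Um - Br))\<^sup>2)
   \<and>
   (\<forall>(n::nat) (m::nat) (s::nat) (r::nat) (R::complex mat) (Q::complex mat) (Um::complex mat)
       (Bstar::complex mat) (Br::complex mat).
      self_adjoint_pd n R \<longrightarrow> Um \<in> carrier_mat n m \<longrightarrow>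
      Q \<in> carrier_mat s n \<longrightarrow> mat_adjoint Q * Q = R \<longrightarrow>
      best_rank_approx s m r (Q * Um) Bstar \<longrightarrow>
      Br \<in> carrier_mat s m \<longrightarrow> vec_space.rank s Br = r \<longrightarrow>
      (1 / real m) * (frob_norm (Q * Um - Bstar))\<^sup>2
        \<le> (1 / real m) * (\<Sum>i<m. (U_norm R (col Um i - U_proj R (U_r_space s R Q Br) (col Um i)))\<^sup>2)
      \<and> (1 / real m) * (\<Sum>i<m. (U_norm R (col Um i - U_proj R (U_r_space s R Q Br) (col Um i)))\<^sup>2)
        \<le> (1 / real m) * (frob_norm (Q * Um - Br))\<^sup>2)"
  apply (rule conjI)
   apply (intro allI impI)
   apply (rule main_generic[OF hyp_real]; assumption)
  apply (intro allI impI)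
  apply (rule main_generic[OF hyp_complex]; assumption)
  done

end
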